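(* Let $G\in\mathcal{G}(\widehat{C}_6,\widehat{C}_7)$, let $x\in V(G)$, let $A$ be a connected component of $G[N_2(x)]$ not belonging to $A^*$, and let $a\in V(A)$ with $|N(a)\cap D|=2$. Then every independent set $S\subseteq N_2(x)\setminus V(A^* )$ with $D\subseteq N(S)$ contains $a$.
   Context: All graphs are finite, simple and undirected. $\mathcal{G}(\widehat{C}_6,\widehat{C}_7)$ is the family of graphs with no subgraph (not necessarily induced) isomorphic to $C_6$ or $C_7$. For a vertex set $S$, $N_i(S)$ is the set of vertices at distance exactly $i$ from $S$, $N(S)=N_1(S)$, $N(v)=N(\{v\})$, $N_2(v)=N_2(\{v\})$ (all in $G$). $A^*$ is the set of connected components $A$ of $G[N_2(x)]$ for which there exists a vertex $a\in V(A)$ with $N(x)\cap N(a)=N(x)\cap N(V(A))$; $V(A^* )$ is the union of their vertex sets; and $D=N(x)\setminus N(V(A^* ))$. *)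

theory Defs
  imports Main
begin

definition simple_graph :: "'a set \<Rightarrow> ('a \<Rightarrow> 'a \<Rightarrow> bool) \<Rightarrow> bool" where
  "simple_graph V E \<longleftrightarrow> finite V \<and> (\<forall>u v. E u v \<longrightarrow> u \<in> V \<and> v \<in> V)
     \<and> (\<forall>u v. E u v \<longrightarrow> E v u) \<and> (\<forall>v. \<not> E v v)"

definition has_cycle_subgraph :: "'a set \<Rightarrow> ('a \<Rightarrow> 'a \<Rightarrow> bool) \<Rightarrow> nat \<Rightarrow> bool" where
  "has_cycle_subgraph V E k \<longleftrightarrow> (\<exists>f :: nat \<Rightarrow> 'a. inj_on f {..<k} \<and> (\<forall>i<k. f i \<in> V)
     \<and> (\<forall>i<k. E (f i) (f (Suc i mod k))))"

definition nbhd :: "'a set \<Rightarrow> ('a \<Rightarrow> 'a \<Rightarrow> bool) \<Rightarrow> 'a set \<Rightarrow> 'a set" where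
  "nbhd V E S = {v \<in> V. v \<notin> S \<and> (\<exists>s\<in>S. E s v)}"

definition nbhd2 :: "'a set \<Rightarrow> ('a \<Rightarrow> 'a \<Rightarrow> bool) \<Rightarrow> 'a set \<Rightarrow> 'a set" where
  "nbhd2 V E S = {v \<in> V. v \<notin> S \<and> v \<notin> nbhd V E S \<and> (\<exists>u\<in>nbhd V E S. E u v)}"

definition components :: "('a \<Rightarrow> 'a \<Rightarrow> bool) \<Rightarrow> 'a set \<Rightarrow> 'a set set" where
  "components E W = {C. \<exists>u\<in>W. C = {v. (\<lambda>a b. a \<in> W \<and> b \<in> W \<and> E a b)\<^sup>*\<^sup>* u v}}"

definition independent :: "('a \<Rightarrow> 'a \<Rightarrow> bool) \<Rightarrow> 'a set \<Rightarrow> bool" where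
  "independent E S \<longleftrightarrow> (\<forall>u\<in>S. \<forall>v\<in>S. \<not> E u v)"

definition Astar :: "'a set \<Rightarrow> ('a \<Rightarrow> 'a \<Rightarrow> bool) \<Rightarrow> 'a \<Rightarrow> 'a set set" where
  "Astar V E x = {A \<in> components E (nbhd2 V E {x}).
     \<exists>a\<in>A. nbhd V E {x} \<inter> nbhd V E {a} = nbhd V E {x} \<inter> nbhd V E A}"

definition Dset :: "'a set \<Rightarrow> ('a \<Rightarrow> 'a \<Rightarrow> bool) \<Rightarrow> 'a \<Rightarrow> 'a set" where
  "Dset V E x = nbhd V E {x} - nbhd V E (\<Union> (Astar V E x))"

end

theory Submission
  imports Defs
begin

locale G6 =
  fixes V :: "'a set" and E :: "'a \<Rightarrow> 'a \<Rightarrow> bool" and x :: 'a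
  assumes sg: "simple_graph V E"
    and nc6: "\<not> has_cycle_subgraph V E 6" and nc7: "\<not> has_cycle_subgraph V E 7"
    and xV: "x \<in> V"
begin

abbreviation "Nx \<equiv> nbhd V E {x}"
abbreviation "N2 \<equiv> nbhd2 V E {x}"
abbreviation "R \<equiv> (\<lambda>a b. a \<in> N2 \<and> b \<in> N2 \<and> E a b)"

lemma Esym: "E u v \<Longrightarrow> E v u" using sg unfolding simple_graph_def by blast
lemma Eirr[simp]: "\<not> E v v" using sg unfolding simple_graph_def by blast
lemma EV: "E u v \<Longrightarrow> u \<in> V \<and> v \<in> V" using sg unfolding simple_graph_def by blast
lemma Ene: "E u v \<Longrightarrow> u \<noteq> v" by auto

lemma Nx_iff: "d \<in> Nx \<longleftrightarrow> E x d"
  unfolding nbhd_def using EV Ene by auto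

lemma N2_iff: "v \<in> N2 \<longleftrightarrow> v \<noteq> x \<and> \<not> E x v \<and> (\<exists>d. E x d \<and> E d v)"
  unfolding nbhd2_def using EV Ene Nx_iff by (auto simp: nbhd_def)

lemma N2_ne_x: "v \<in> N2 \<Longrightarrow> v \<noteq> x" by (simp add: N2_iff)
lemma N2_not_Nx: "v \<in> N2 \<Longrightarrow> E x d \<Longrightarrow> v \<noteq> d" by (auto simp: N2_iff)

lemma c6:
  assumes "E v0 v1" "E v1 v2" "E v2 v3" "E v3 v4" "E v4 v5" "E v5 v0"
    and "distinct [v0,v1,v2,v3,v4,v5]"
  shows False
proof -
  let ?f = "(!) [v0,v1,v2,v3,v4,v5]"
  have "inj_on ?f {..<6}" by (rule inj_on_nth) (use assms in auto)
  moreover have "\<forall>i<6. ?f i \<in> V \<and> E (?f i) (?f (Suc i mod 6))"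
  proof (intro allI impI)
    fix i :: nat assume "i < 6"
    then consider "i=0"|"i=1"|"i=2"|"i=3"|"i=4"|"i=5" by linarith
    then show "?f i \<in> V \<and> E (?f i) (?f (Suc i mod 6))" using assms EV by cases simp_all
  qed
  ultimately show False using nc6 unfolding has_cycle_subgraph_def by blast
qed

lemma c7:
  assumes "E v0 v1" "E v1 v2" "E v2 v3" "E v3 v4" "E v4 v5" "E v5 v6" "E v6 v0"
    and "distinct [v0,v1,v2,v3,v4,v5,v6]"
  shows False
proof -
  let ?f = "(!) [v0,v1,v2,v3,v4,v5,v6]"
  have "inj_on ?f {..<7}" by (rule inj_on_nth) (use assms in auto)
  moreover have "\<forall>i<7. ?f i \<in> V \<and> E (?f i) (?f (Suc i mod 7))"
  proof (intro allI impI)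
    fix i :: nat assume "i < 7"
    then consider "i=0"|"i=1"|"i=2"|"i=3"|"i=4"|"i=5"|"i=6" by linarith
    then show "?f i \<in> V \<and> E (?f i) (?f (Suc i mod 7))" using assms EV by cases simp_all
  qed
  ultimately show False using nc7 unfolding has_cycle_subgraph_def by blast
qed

lemma c6s:
  assumes "E v0 v1 \<or> E v1 v0" "E v1 v2 \<or> E v2 v1" "E v2 v3 \<or> E v3 v2" "E v3 v4 \<or> E v4 v3"
    "E v4 v5 \<or> E v5 v4" "E v5 v0 \<or> E v0 v5"
    and "distinct [v0,v1,v2,v3,v4,v5]"
  shows False
  by (rule c6[of v0 v1 v2 v3 v4 v5]) (use assms Esym in blast)+

lemma c7s:
  assumes "E v0 v1 \<or> E v1 v0" "E v1 v2 \<or> E v2 v1" "E v2 v3 \<or> E v3 v2" "E v3 v4 \<or> E v4 v3"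
    "E v4 v5 \<or> E v5 v4" "E v5 v6 \<or> E v6 v5" "E v6 v0 \<or> E v0 v6"
    and "distinct [v0,v1,v2,v3,v4,v5,v6]"
  shows False
  by (rule c7[of v0 v1 v2 v3 v4 v5 v6]) (use assms Esym in blast)+

lemma ds1: "E u v \<Longrightarrow> u \<noteq> v" and ds2: "E u v \<Longrightarrow> v \<noteq> u"
  and ds3: "w \<in> N2 \<Longrightarrow> E x d \<Longrightarrow> w \<noteq> d" and ds4: "w \<in> N2 \<Longrightarrow> E x d \<Longrightarrow> d \<noteq> w"
  and ds5: "w \<in> N2 \<Longrightarrow> w \<noteq> x" and ds6: "w \<in> N2 \<Longrightarrow> x \<noteq> w"
  using N2_not_Nx N2_ne_x by auto
lemmas ds = ds1 ds2 ds3 ds4 ds5 ds6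

lemma R_sym: "R\<^sup>*\<^sup>* u v \<Longrightarrow> R\<^sup>*\<^sup>* v u"
proof -
  have "symp R" by (auto intro!: sympI simp: Esym)
  thus "R\<^sup>*\<^sup>* u v \<Longrightarrow> R\<^sup>*\<^sup>* v u" by (metis sympD symp_rtranclp)
qed

lemma R_N2: "R\<^sup>*\<^sup>* u v \<Longrightarrow> u \<in> N2 \<Longrightarrow> v \<in> N2"
  by (induction rule: rtranclp_induct) auto

lemma comp_eq: "C \<in> components E N2 \<Longrightarrow> s \<in> C \<Longrightarrow> C = {v. R\<^sup>*\<^sup>* s v}"
  unfolding components_def
  by (auto intro: rtranclp_trans R_sym)

lemma comp_N2: "C \<in> components E N2 \<Longrightarrow> C \<subseteq> N2"
  unfolding components_def using R_N2 by blast

lemma comp_of: "s \<in> N2 \<Longrightarrow> {v. R\<^sup>*\<^sup>* s v} \<in> components E N2"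
  unfolding components_def by blast

lemma nbhd_Nx:
  assumes B: "B \<subseteq> N2"
  shows "d \<in> Nx \<inter> nbhd V E B \<longleftrightarrow> E x d \<and> (\<exists>v\<in>B. E v d)"
proof
  assume "d \<in> Nx \<inter> nbhd V E B"
  thus "E x d \<and> (\<exists>v\<in>B. E v d)" using Nx_iff unfolding nbhd_def by blast
next
  assume h: "E x d \<and> (\<exists>v\<in>B. E v d)"
  then have "d \<notin> B" using B N2_not_Nx by blast
  then show "d \<in> Nx \<inter> nbhd V E B" using h Nx_iff EV unfolding nbhd_def by blast
qed

lemma astar_iff:
  assumes B: "B \<subseteq> N2"
  shows "B \<in> Astar V E x \<longleftrightarrow> B \<in> components E N2 \<and>
   (\<exists>v\<in>B. \<forall>d. E x d \<longrightarrow> (E v d \<longleftrightarrow> (\<exists>w\<in>B. E w d)))"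
proof -
  have e: "Nx \<inter> nbhd V E {v} = Nx \<inter> nbhd V E B \<longleftrightarrow> (\<forall>d. E x d \<longrightarrow> (E v d \<longleftrightarrow> (\<exists>w\<in>B. E w d)))"
    if v: "v \<in> B" for v
  proof -
    have v2: "{v} \<subseteq> N2" using v B by blast
    have "Nx \<inter> nbhd V E {v} = Nx \<inter> nbhd V E B \<longleftrightarrow> (\<forall>d. d \<in> Nx \<inter> nbhd V E {v} \<longleftrightarrow> d \<in> Nx \<inter> nbhd V E B)"
      by blast
    also have "\<dots> \<longleftrightarrow> (\<forall>d. (E x d \<and> E v d) \<longleftrightarrow> (E x d \<and> (\<exists>w\<in>B. E w d)))"
      using nbhd_Nx[OF B] nbhd_Nx[OF v2] by simp
    finally show ?thesis by blast
  qed
  show ?thesis unfolding Astar_def using e by auto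
qed

lemma x_N2[simp]: "x \<notin> N2" using N2_ne_x by blast
lemma N2_noE[simp]: "v \<in> N2 \<Longrightarrow> \<not> E x v" by (simp add: N2_iff)
lemma N2_has: "v \<in> N2 \<Longrightarrow> \<exists>d. E x d \<and> E v d" unfolding N2_iff using Esym by blast

end

locale G7 = G6 +
  fixes A :: "'a set" and a d1 d2 :: 'a
  assumes A_comp: "A \<in> components E N2" and A_ns: "A \<notin> Astar V E x"
    and aA: "a \<in> A" and d12: "d1 \<noteq> d2" and xd1: "E x d1" and xd2: "E x d2"
    and ad1: "E a d1" and ad2: "E a d2"
begin

lemma aN2: "a \<in> N2" using A_comp aA comp_N2 by blast

lemma star_A: "v \<in> A \<Longrightarrow> v = a \<or> E a v"
proof -
  assume "v \<in> A"
  then have "R\<^sup>*\<^sup>* a v" using comp_eq[OF A_comp aA] by blast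
  then show ?thesis
  proof (induction rule: rtranclp_induct)
    case base then show ?case by simp
  next
    case (step u w)
    show ?case
    proof (cases "u = a")
      case True then show ?thesis using step by blast
    next
      case False
      with step have au: "E a u" by blast
      show ?thesis
      proof (rule ccontr)
        assume wa: "\<not> (w = a \<or> E a w)"
        obtain d where d: "E x d" "E w d" using N2_has step by blast
        show False
        proof (cases "d = d1")
          case True
          show False by (rule c6s[of x d w u a d2]) (insert d step au wa True d12 xd2 ad2 aN2, simp_all add: ds)
        next
          case False
          show False by (rule c6s[of x d w u a d1]) (insert d step au wa False d12 xd1 ad1 aN2, simp_all add: ds)
        qed
      qed
    qed
  qed
qed

lemma not_in_A:
  assumes s: "s \<in> N2" "s \<noteq> a" "E s d1"
  shows "s \<notin> A"
proof
  assume sA: "s \<in> A"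
  have as: "E a s" using star_A[OF sA] s by blast
  have AN: "A \<subseteq> N2" using comp_N2[OF A_comp] .
  obtain d3 where d3: "E x d3" "\<not> E a d3" "\<exists>w\<in>A. E w d3"
    using A_ns aA unfolding astar_iff[OF AN] using A_comp by blast
  then obtain b where b: "b \<in> A" "E b d3" by blast
  have bN: "b \<in> N2" using b AN by blast
  have ab: "E a b" using star_A[OF b(1)] b d3 by blast
  have d31: "d3 \<noteq> d1" "d3 \<noteq> d2" using d3 ad1 ad2 by auto
  show False
  proof (cases "b = s")
    case True
    show False by (rule c6s[of x d3 s d1 a d2]) (insert d3 b True s d31 d12 xd1 xd2 ad1 ad2 aN2, simp_all add: ds)
  next
    case False
    show False by (rule c6s[of x d3 b a s d1]) (insert d3 b bN False s d31 ab as xd1 ad1 aN2, simp_all add: ds)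
  qed
qed

lemma T_sub:
  assumes s: "s \<in> N2" "s \<noteq> a" "E s d1" and v: "R\<^sup>*\<^sup>* s v"
  shows "v \<notin> A" "E x d \<Longrightarrow> E v d \<Longrightarrow> d = d1 \<or> d = d2"
proof -
  have sA: "s \<notin> A" using not_in_A s .
  have nA: "v' \<notin> A" if hv: "R\<^sup>*\<^sup>* s v'" for v'
  proof
    assume "v' \<in> A"
    then have "R\<^sup>*\<^sup>* a v'" using comp_eq[OF A_comp aA] by blast
    moreover have "R\<^sup>*\<^sup>* v' s" using R_sym hv .
    ultimately have "R\<^sup>*\<^sup>* a s" by (rule rtranclp_trans)
    then show False using sA comp_eq[OF A_comp aA] by blast
  qed
  show "v \<notin> A" using nA v .
  have "\<forall>d. E x d \<longrightarrow> E v d \<longrightarrow> d = d1 \<or> d = d2" using v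
  proof (induction rule: rtranclp_induct)
    case base
    show ?case
    proof (intro allI impI, rule ccontr)
      fix d assume d: "E x d" "E s d" "\<not>(d = d1 \<or> d = d2)"
      show False by (rule c6s[of x d s d1 a d2]) (insert d s d12 xd1 xd2 ad1 ad2 aN2, simp_all add: ds)
    qed
  next
    case (step u w)
    have Rsw: "R\<^sup>*\<^sup>* s w" using step(1,2) by (rule rtranclp.rtrancl_into_rtrancl)
    have wa: "w \<noteq> a" using nA[OF Rsw] aA by blast
    have ua: "u \<noteq> a" using nA[OF step(1)] aA by blast
    obtain di where di: "E x di" "E u di" using N2_has step(2) by blast
    have diW: "di = d1 \<or> di = d2" using step.IH di by blast
    show ?case
    proof (intro allI impI, rule ccontr)
      fix d assume d: "E x d" "E w d" "\<not>(d = d1 \<or> d = d2)"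
      from diW show False
      proof
        assume "di = d1"
        then show False by (intro c7s[of x d w u d1 a d2]) (insert d di step(2) wa ua d12 xd1 xd2 ad1 ad2 aN2, simp_all add: ds)
      next
        assume "di = d2"
        then show False by (intro c7s[of x d w u d2 a d1]) (insert d di step(2) wa ua d12 xd1 xd2 ad1 ad2 aN2, simp_all add: ds)
      qed
    qed
  qed
  then show "E x d \<Longrightarrow> E v d \<Longrightarrow> d = d1 \<or> d = d2" by blast
qed

lemma not_both:
  assumes s: "s \<in> N2" "s \<noteq> a" "E s d1" "s \<notin> \<Union>(Astar V E x)" and v: "R\<^sup>*\<^sup>* s v"
  shows "\<not>(E v d1 \<and> E v d2)"
proof
  assume vv: "E v d1 \<and> E v d2"
  let ?B = "{w. R\<^sup>*\<^sup>* s w}"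
  have Bc: "?B \<in> components E N2" using comp_of s by blast
  have BN: "?B \<subseteq> N2" using comp_N2[OF Bc] .
  have "?B \<in> Astar V E x"
    unfolding astar_iff[OF BN]
  proof (intro conjI Bc bexI[of _ v] allI impI)
    fix d assume xd: "E x d"
    show "E v d \<longleftrightarrow> (\<exists>w\<in>?B. E w d)"
      using v T_sub(2)[OF s(1-3)] vv xd by blast
  next
    show "v \<in> ?B" using v by simp
  qed
  moreover have "s \<in> ?B" by simp
  ultimately show False using s(4) by blast
qed

lemma key:
  assumes s: "s \<in> N2" "s \<noteq> a" "E s d1" "s \<notin> \<Union>(Astar V E x)"
  shows "\<not> E s d2" "\<exists>q. q \<in> N2 \<and> E s q \<and> E q d2 \<and> \<not> E q d1"
proof -
  show "\<not> E s d2" using not_both[OF s, of s] s(3) by blast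
  let ?B = "{w. R\<^sup>*\<^sup>* s w}"
  have Bc: "?B \<in> components E N2" using comp_of s by blast
  have BN: "?B \<subseteq> N2" using comp_N2[OF Bc] .
  have sB: "s \<in> ?B" by simp
  have "?B \<notin> Astar V E x" using s(4) sB by blast
  then obtain d where d: "E x d" "\<not>(E s d \<longleftrightarrow> (\<exists>w\<in>?B. E w d))"
    unfolding astar_iff[OF BN] using Bc sB by blast
  then obtain w where w: "R\<^sup>*\<^sup>* s w" "E w d" "\<not> E s d" by auto
  have "d = d1 \<or> d = d2" using T_sub(2)[OF s(1-3) w(1) d(1) w(2)] .
  then have dd2: "d = d2" using w(3) s(3) by blast
  have cls: "(E v d1 \<and> \<not>E v d2) \<or> (E v d2 \<and> \<not>E v d1)" if hv: "R\<^sup>*\<^sup>* s v" for v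
  proof -
    have "v \<in> N2" using R_N2 hv s(1) .
    then obtain di where di: "E x di" "E v di" using N2_has by blast
    have "di = d1 \<or> di = d2" using T_sub(2)[OF s(1-3) hv di] .
    then show ?thesis using not_both[OF s hv] di by blast
  qed
  have edge: "E v d1 \<or> (\<exists>p q. R\<^sup>*\<^sup>* s p \<and> R\<^sup>*\<^sup>* s q \<and> E p q \<and> E p d1 \<and> E q d2)"
    if hv: "R\<^sup>*\<^sup>* s v" for v
    using hv
  proof (induction rule: rtranclp_induct)
    case base then show ?case using s(3) by blast
  next
    case (step u y)
    have Rsy: "R\<^sup>*\<^sup>* s y" using step(1,2) by (rule rtranclp.rtrancl_into_rtrancl)
    show ?case using step.IH cls[OF Rsy] step(1,2) Rsy by blast
  qed
  obtain p q where pq: "R\<^sup>*\<^sup>* s p" "R\<^sup>*\<^sup>* s q" "E p q" "E p d1" "E q d2"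
    using edge[OF w(1)] cls[OF w(1)] w(2) dd2 by blast
  have pN: "p \<in> N2" using R_N2 pq(1) s(1) .
  have qN: "q \<in> N2" using R_N2 pq(2) s(1) .
  have Pp: "\<not> E p d2" using cls[OF pq(1)] pq(4) by blast
  have Qq: "\<not> E q d1" using cls[OF pq(2)] pq(5) by blast
  have pnq: "p \<noteq> q" using Pp pq(5) by blast
  have nbp: "E u d2 \<and> \<not>E u d1" if hu: "R\<^sup>*\<^sup>* s u" "E p u" "u \<noteq> q" for u
  proof (rule ccontr)
    assume "\<not> (E u d2 \<and> \<not>E u d1)"
    then have ud: "E u d1" using cls[OF hu(1)] by blast
    have uN: "u \<in> N2" using R_N2 hu(1) s(1) .
    show False by (rule c6s[of x d1 u p q d2]) (insert ud uN hu pq pN qN pnq d12 xd1 xd2, simp_all add: ds)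
  qed
  have nbq: "E u d1 \<and> \<not>E u d2" if hu: "R\<^sup>*\<^sup>* s u" "E q u" "u \<noteq> p" for u
  proof (rule ccontr)
    assume "\<not> (E u d1 \<and> \<not>E u d2)"
    then have ud: "E u d2" using cls[OF hu(1)] by blast
    have uN: "u \<in> N2" using R_N2 hu(1) s(1) .
    show False by (rule c6s[of x d2 u q p d1]) (insert ud uN hu pq pN qN pnq d12 xd1 xd2, simp_all add: ds)
  qed
  have star: "v = p \<or> v = q \<or> E p v \<or> E q v" if hv: "R\<^sup>*\<^sup>* p v" for v
    using hv
  proof (induction rule: rtranclp_induct)
    case base then show ?case by simp
  next
    case (step u y)
    have Rsu: "R\<^sup>*\<^sup>* s u" using pq(1) step(1) by (rule rtranclp_trans)
    have Rsy: "R\<^sup>*\<^sup>* s y" using Rsu step(2) by (rule rtranclp.rtrancl_into_rtrancl)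
    have uN: "u \<in> N2" and yN: "y \<in> N2" and uy: "E u y" using step(2) by auto
    consider "u = p" | "u = q" | "E p u" "u \<noteq> p" "u \<noteq> q" | "E q u" "u \<noteq> p" "u \<noteq> q"
      using step.IH by blast
    then show ?case
    proof cases
      case 1 then show ?thesis using uy by blast
    next
      case 2 then show ?thesis using uy by blast
    next
      case 3
      have Qu: "E u d2" "\<not> E u d1" using nbp[OF Rsu 3(1,3)] by auto
      have "y = p"
      proof (rule ccontr)
        assume yp: "y \<noteq> p"
        from cls[OF Rsy] show False
        proof
          assume Py: "E y d1 \<and> \<not> E y d2"
          have yq: "y \<noteq> q" using Py pq(5) by blast
          show False by (rule c7s[of x d1 y u p q d2]) (insert Py yq yp Qu 3 uN yN uy pq pN qN pnq d12 xd1 xd2, simp_all add: ds)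
        next
          assume Qy: "E y d2 \<and> \<not> E y d1"
          show False by (rule c6s[of x d1 p u y d2]) (insert Qy yp Qu 3 uN yN uy pq pN qN pnq d12 xd1 xd2, simp_all add: ds)
        qed
      qed
      then show ?thesis by blast
    next
      case 4
      have Pu: "E u d1" "\<not> E u d2" using nbq[OF Rsu 4(1,2)] by auto
      have "y = q"
      proof (rule ccontr)
        assume yq: "y \<noteq> q"
        from cls[OF Rsy] show False
        proof
          assume Qy: "E y d2 \<and> \<not> E y d1"
          have yp: "y \<noteq> p" using Qy pq(4) by blast
          show False by (rule c7s[of x d2 y u q p d1]) (insert Qy yq yp Pu 4 uN yN uy pq pN qN pnq d12 xd1 xd2, simp_all add: ds)
        next
          assume Py: "E y d1 \<and> \<not> E y d2"
          show False by (rule c6s[of x d2 q u y d1]) (insert Py yq Pu 4 uN yN uy pq pN qN pnq d12 xd1 xd2, simp_all add: ds)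
        qed
      qed
      then show ?thesis by blast
    qed
  qed
  have Rps: "R\<^sup>*\<^sup>* p s" using R_sym pq(1) .
  have sq: "s \<noteq> q" using Qq s(3) by blast
  from star[OF Rps] show "\<exists>q. q \<in> N2 \<and> E s q \<and> E q d2 \<and> \<not> E q d1"
  proof (elim disjE)
    assume "s = p" then show ?thesis using pq(3,5) Qq qN by blast
  next
    assume "s = q" then show ?thesis using sq by blast
  next
    assume "E p s" then show ?thesis using nbp[OF _ _ sq] s(3) by blast
  next
    assume "E q s" then show ?thesis using Esym pq(5) Qq qN by blast
  qed
qed

end
theorem corollary2p12:
  fixes V :: "'a set" and E :: "'a \<Rightarrow> 'a \<Rightarrow> bool" and x a :: 'a and A S :: "'a set"
  assumes "simple_graph V E"
    and "\<not> has_cycle_subgraph V E 6" and "\<not> has_cycle_subgraph V E 7"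
    and "x \<in> V"
    and "A \<in> components E (nbhd2 V E {x})" and "A \<notin> Astar V E x"
    and "a \<in> A"
    and "card (nbhd V E {a} \<inter> Dset V E x) = 2"
    and "S \<subseteq> nbhd2 V E {x} - \<Union> (Astar V E x)"
    and "independent E S"
    and "Dset V E x \<subseteq> nbhd V E S"
  shows "a \<in> S"
proof (rule ccontr)
  assume aS: "a \<notin> S"
  interpret G6 V E x using assms(1-4) by unfold_locales
  obtain d1 d2 where dd: "nbhd V E {a} \<inter> Dset V E x = {d1,d2}" "d1 \<noteq> d2"
    using card_2_iff[THEN iffD1, OF assms(8)] by (elim exE conjE)
  have dD: "d1 \<in> Dset V E x" "d2 \<in> Dset V E x" "d1 \<in> nbhd V E {a}" "d2 \<in> nbhd V E {a}"
    using dd(1) by blast+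
  have xd: "E x d1" "E x d2" using dD(1,2) Nx_iff unfolding Dset_def by blast+
  have ad: "E a d1" "E a d2" using dD(3,4) unfolding nbhd_def by blast+
  have g1i: "G7 V E x A a d1 d2"
    by (intro G7.intro G7_axioms.intro G6_axioms) (use assms(5-7) dd(2) xd ad in simp_all)
  have g2i: "G7 V E x A a d2 d1"
    by (intro G7.intro G7_axioms.intro G6_axioms) (use assms(5-7) dd(2) xd ad in simp_all)
  interpret g1: G7 V E x A a d1 d2 by (rule g1i)
  interpret g2: G7 V E x A a d2 d1 by (rule g2i)
  obtain s1 where s1: "s1 \<in> S" "E s1 d1" using dD(1) assms(11) unfolding nbhd_def by blast
  obtain s2 where s2: "s2 \<in> S" "E s2 d2" using dD(2) assms(11) unfolding nbhd_def by blast
  have s1N: "s1 \<in> N2" "s1 \<notin> \<Union>(Astar V E x)" "s1 \<noteq> a" using s1 assms(9) aS by blast+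
  have s2N: "s2 \<in> N2" "s2 \<notin> \<Union>(Astar V E x)" "s2 \<noteq> a" using s2 assms(9) aS by blast+
  have n1: "\<not> E s1 d2" using g1.key(1)[OF s1N(1,3) s1(2) s1N(2)] .
  obtain q where q: "q \<in> N2" "E s1 q" "E q d2" "\<not> E q d1"
    using g1.key(2)[OF s1N(1,3) s1(2) s1N(2)] by blast
  have n2: "\<not> E s2 d1" using g2.key(1)[OF s2N(1,3) s2(2) s2N(2)] .
  obtain p where p: "p \<in> N2" "E s2 p" "E p d1" "\<not> E p d2"
    using g2.key(2)[OF s2N(1,3) s2(2) s2N(2)] by blast
  have ind: "\<not> E u v" if "u \<in> S" "v \<in> S" for u v
    using assms(10) that unfolding independent_def by blast
  have ne1: "s1 \<noteq> s2" using n2 s1(2) by blast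
  have ne2: "q \<noteq> p" using q(3) p(4) by blast
  have ne3: "q \<noteq> s2" using ind[OF s1(1) s2(1)] q(2) by blast
  have ne4: "p \<noteq> s1" using ind[OF s2(1) s1(1)] p(2) by blast
  note ne = ne1 ne2 ne3 ne4
  show False by (rule c6s[of d1 s1 q d2 s2 p]) (insert ne s1 s2 s1N s2N q p xd dd(2), simp_all add: ds)
qed

end
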